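(* Let $S$ be a nonnegative half-integer with $N_o=2S+1$, let $0\le N_e\le N_o$, let $\hat c_j,\hat c_j^\dagger$ ($j=0,\dots,2S$) be fermionic operators obeying the canonical anticommutation relations, and let $\mathcal H_{N_e,N_o}$ be the span of all Slater determinants $\hat c^\dagger_{k_1}\cdots\hat c^\dagger_{k_{N_e}}|vac\rangle$, $0\le k_1<\cdots<k_{N_e}\le 2S$. For integers $m,n\ge 0$ define $$\hat{\mathcal L}_{m,n}=\sum_{j=0}^{2S}A_{m,n}(j)\,\hat c^\dagger_{j+m-n}\hat c_j,\qquad A_{m,n}(j)=\begin{cases}\sqrt{\frac{j!}{(j-n)!}}\sqrt{\frac{(j-n+m)!}{(j-n)!}},& j\ge n,\\ 0,& j<n,\end{cases}$$ with terms having $j+m-n\notin\{0,\dots,2S\}$ omitted. Fix a nonzero $|\phi\rangle\in\mathcal H_{N_e,N_o}$. Then $$\mathrm{span}\Big\{\prod_{t=1}^{N_{\max}}\hat{\mathcal L}_{m_t,n_t}|\phi\rangle\ \Big|\ 0\le N_{\max}\le N_e,\ m_t,n_t\ge0\Big\}=\mathcal H_{N_e,N_o}.$$ Consequently, for any normalized state $|\psi_0\rangle\in\mathcal H_{N_e,N_o}$ (ground state) or any subspace $\mathcal G\subset\mathcal H_{N_e,N_o}$ spanned by ground states, every state $|\psi\rangle\in\mathcal G^\perp$ (a neutral excitation) is a finite linear combination of states of the form $\prod_{t=1}^{N_{\max}}\hat{\mathcal L}_{m_t,n_t}|\psi_0\rangle$ with $|\psi_0\rangle$ a ground state.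
   Context: $|vac\rangle$ is the fermionic vacuum; the empty product is the identity. $\hat{\mathcal L}_{m,n}$ is the orbital-truncated second-quantized form on the disk of $\sum_i(\hat b_i^\dagger)^m\hat b_i^n$, with $\hat b,\hat b^\dagger$ single-particle guiding-center ladder operators ($[\hat b,\hat b^\dagger]=1$) and orbital $j$ the state $(\hat b^\dagger)^j|0\rangle/\sqrt{j!}$. A neutral gapped excitation relative to a ground-state subspace $\mathcal G$ is any $|\psi\rangle\in\mathcal H_{N_e,N_o}$ orthogonal to $\mathcal G$. *)

theory Defs
  imports Complex_Main
begin

text \<open>A many-body state with orbitals 0..No-1 is represented by its
coefficients in the Slater-determinant basis: a function from finite sets of occupied
orbitals K to complex amplitudes. The basis vector for K = {k1 < ... < kN} is
c_{k1}^dagger ... c_{kN}^dagger |vac>.\<close>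

type_synonym fstate = "nat set \<Rightarrow> complex"

definition slaters :: "nat \<Rightarrow> nat \<Rightarrow> nat set set" where
  "slaters Ne No = {K. K \<subseteq> {..<No} \<and> card K = Ne}"

definition Hspace :: "nat \<Rightarrow> nat \<Rightarrow> fstate set" where
  "Hspace Ne No = {v. \<forall>K. v K \<noteq> 0 \<longrightarrow> K \<in> slaters Ne No}"

definition cspan :: "fstate set \<Rightarrow> fstate set" where
  "cspan X = {v. \<exists>B c. finite B \<and> B \<subseteq> X \<and> v = (\<lambda>K. \<Sum>b\<in>B. c b * b K)}"

definition ket :: "nat set \<Rightarrow> fstate" where
  "ket K = (\<lambda>K'. if K' = K then 1 else 0)"

text \<open>c_j |K> = (-1)^{#{k in K. k<j}} |K - {j}> if j in K, else 0 (CAR ordering convention).\<close>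
definition ann_sign :: "nat \<Rightarrow> nat set \<Rightarrow> complex" where
  "ann_sign j K = (-1) ^ card {k\<in>K. k < j}"

text \<open>c_a^dagger c_j applied to the basis vector |K>.\<close>
definition hop_ket :: "nat \<Rightarrow> nat \<Rightarrow> nat set \<Rightarrow> fstate" where
  "hop_ket a j K =
     (if j \<in> K \<and> a \<notin> K - {j}
      then (\<lambda>K'. ann_sign j K * ann_sign a (K - {j}) * ket (insert a (K - {j})) K')
      else (\<lambda>_. 0))"

text \<open>c_a^dagger c_j extended linearly to states supported on finite sets of orbitals
below No (the states considered always have finite support).\<close>
definition hop :: "nat \<Rightarrow> nat \<Rightarrow> nat \<Rightarrow> fstate \<Rightarrow> fstate" where
  "hop No a j v = (\<lambda>K'. \<Sum>K\<in>Pow {..<No}. v K * hop_ket a j K K')"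

definition Acoef :: "nat \<Rightarrow> nat \<Rightarrow> nat \<Rightarrow> real" where
  "Acoef m n j = (if n \<le> j
      then sqrt (fact j / fact (j - n)) * sqrt (fact (j - n + m) / fact (j - n))
      else 0)"

text \<open>L_{m,n} = sum_{j=0}^{No-1} A_{m,n}(j) c^dagger_{j+m-n} c_j, terms with j+m-n outside
{0..No-1} omitted (terms with j<n vanish since A_{m,n}(j)=0).\<close>
definition Lop :: "nat \<Rightarrow> nat \<Rightarrow> nat \<Rightarrow> fstate \<Rightarrow> fstate" where
  "Lop No m n v = (\<lambda>K'. \<Sum>j\<in>{j. j < No \<and> n \<le> j \<and> j - n + m < No}.
      complex_of_real (Acoef m n j) * hop No (j - n + m) j v K')"

text \<open>Product L_{m_1,n_1} ... L_{m_N,n_N} |phi> (rightmost factor applied first).\<close>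
definition Lprod :: "nat \<Rightarrow> (nat \<times> nat) list \<Rightarrow> fstate \<Rightarrow> fstate" where
  "Lprod No ms v = foldr (\<lambda>(m, n) f. Lop No m n \<circ> f) ms id v"

definition inner_f :: "nat \<Rightarrow> nat \<Rightarrow> fstate \<Rightarrow> fstate \<Rightarrow> complex" where
  "inner_f Ne No u v = (\<Sum>K\<in>slaters Ne No. cnj (u K) * v K)"

end

theory Submission
  imports Defs
begin

section \<open>Linear spans\<close>

lemma cspan_lincomb:
  assumes S: "finite S" and f: "\<forall>i\<in>S. f i \<in> cspan X"
  shows "(\<lambda>K. \<Sum>i\<in>S. c i * f i K) \<in> cspan X"
proof -
  have "\<forall>i\<in>S. \<exists>B d. finite B \<and> B \<subseteq> X \<and> f i = (\<lambda>K. \<Sum>b\<in>B. d b * b K)"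
    using f unfolding cspan_def by blast
  then obtain B where B: "\<forall>i\<in>S. \<exists>d. finite (B i) \<and> B i \<subseteq> X \<and> f i = (\<lambda>K. \<Sum>b\<in>B i. d b * b K)"
    using bchoice[of S "\<lambda>i B. \<exists>d. finite B \<and> B \<subseteq> X \<and> f i = (\<lambda>K. \<Sum>b\<in>B. d b * b K)"] by blast
  then obtain d where Bd: "\<forall>i\<in>S. finite (B i) \<and> B i \<subseteq> X \<and> f i = (\<lambda>K. \<Sum>b\<in>B i. d i b * b K)"
    using bchoice[of S "\<lambda>i d. finite (B i) \<and> B i \<subseteq> X \<and> f i = (\<lambda>K. \<Sum>b\<in>B i. d b * b K)"] by blast
  define BB where "BB = (\<Union>i\<in>S. B i)"
  define e where "e b = (\<Sum>i\<in>S. c i * (if b \<in> B i then d i b else 0))" for b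
  have finBB: "finite BB" using S Bd by (auto simp: BB_def)
  have "(\<lambda>K. \<Sum>i\<in>S. c i * f i K) = (\<lambda>K. \<Sum>b\<in>BB. e b * b K)"
  proof
    fix K
    have "(\<Sum>b\<in>BB. e b * b K) = (\<Sum>b\<in>BB. \<Sum>i\<in>S. c i * (if b \<in> B i then d i b * b K else 0))"
      unfolding e_def sum_distrib_right by (intro sum.cong refl) auto
    also have "\<dots> = (\<Sum>i\<in>S. \<Sum>b\<in>BB. c i * (if b \<in> B i then d i b * b K else 0))"
      by (rule sum.swap)
    also have "\<dots> = (\<Sum>i\<in>S. c i * (\<Sum>b\<in>BB. (if b \<in> B i then d i b * b K else 0)))"
      by (simp add: sum_distrib_left)
    also have "\<dots> = (\<Sum>i\<in>S. c i * (\<Sum>b\<in>B i. d i b * b K))"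
    proof (rule sum.cong[OF refl])
      fix i assume i: "i \<in> S"
      have "B i \<subseteq> BB" using i by (auto simp: BB_def)
      then have "BB \<inter> B i = B i" by auto
      then show "c i * (\<Sum>b\<in>BB. (if b \<in> B i then d i b * b K else 0)) = c i * (\<Sum>b\<in>B i. d i b * b K)"
        using sum.inter_restrict[OF finBB, of "\<lambda>b. d i b * b K" "B i"] by simp
    qed
    also have "\<dots> = (\<Sum>i\<in>S. c i * f i K)"
      using Bd by (intro sum.cong) auto
    finally show "(\<Sum>i\<in>S. c i * f i K) = (\<Sum>b\<in>BB. e b * b K)" by simp
  qed
  moreover have "BB \<subseteq> X" using Bd by (auto simp: BB_def)
  ultimately show ?thesis unfolding cspan_def using finBB by blast
qed

lemma cspan_base: "x \<in> X \<Longrightarrow> x \<in> cspan X"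
  unfolding cspan_def by (intro CollectI exI[of _ "{x}"] exI[of _ "\<lambda>_. 1"]) auto

lemma cspan_scale: "x \<in> cspan X \<Longrightarrow> (\<lambda>K. c * x K) \<in> cspan X"
  using cspan_lincomb[of "{()}" "\<lambda>_. x" X "\<lambda>_. c"] by simp

lemma cspan_mono: "X \<subseteq> Y \<Longrightarrow> cspan X \<subseteq> cspan Y"
  unfolding cspan_def by blast

definition ospan :: "(fstate \<Rightarrow> fstate) set \<Rightarrow> (fstate \<Rightarrow> fstate) set" where
  "ospan X = {F. \<exists>B c. finite B \<and> B \<subseteq> X \<and> F = (\<lambda>v K. \<Sum>b\<in>B. c b * b v K)}"

lemma ospan_lincomb:
  assumes S: "finite S" and f: "\<forall>i\<in>S. f i \<in> ospan X"
  shows "(\<lambda>v K. \<Sum>i\<in>S. c i * f i v K) \<in> ospan X"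
proof -
  have "\<forall>i\<in>S. \<exists>B d. finite B \<and> B \<subseteq> X \<and> f i = (\<lambda>v K. \<Sum>b\<in>B. d b * b v K)"
    using f unfolding ospan_def by blast
  then obtain B where B: "\<forall>i\<in>S. \<exists>d. finite (B i) \<and> B i \<subseteq> X \<and> f i = (\<lambda>v K. \<Sum>b\<in>B i. d b * b v K)"
    using bchoice[of S "\<lambda>i B. \<exists>d. finite B \<and> B \<subseteq> X \<and> f i = (\<lambda>v K. \<Sum>b\<in>B. d b * b v K)"] by blast
  then obtain d where Bd: "\<forall>i\<in>S. finite (B i) \<and> B i \<subseteq> X \<and> f i = (\<lambda>v K. \<Sum>b\<in>B i. d i b * b v K)"
    using bchoice[of S "\<lambda>i d. finite (B i) \<and> B i \<subseteq> X \<and> f i = (\<lambda>v K. \<Sum>b\<in>B i. d b * b v K)"] by blast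
  define BB where "BB = (\<Union>i\<in>S. B i)"
  define e where "e b = (\<Sum>i\<in>S. c i * (if b \<in> B i then d i b else 0))" for b
  have finBB: "finite BB" using S Bd by (auto simp: BB_def)
  have "(\<lambda>v K. \<Sum>i\<in>S. c i * f i v K) = (\<lambda>v K. \<Sum>b\<in>BB. e b * b v K)"
  proof (intro ext)
    fix v K
    have "(\<Sum>b\<in>BB. e b * b v K) = (\<Sum>b\<in>BB. \<Sum>i\<in>S. c i * (if b \<in> B i then d i b * b v K else 0))"
      unfolding e_def sum_distrib_right by (intro sum.cong refl) auto
    also have "\<dots> = (\<Sum>i\<in>S. \<Sum>b\<in>BB. c i * (if b \<in> B i then d i b * b v K else 0))"
      by (rule sum.swap)
    also have "\<dots> = (\<Sum>i\<in>S. c i * (\<Sum>b\<in>BB. (if b \<in> B i then d i b * b v K else 0)))"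
      by (simp add: sum_distrib_left)
    also have "\<dots> = (\<Sum>i\<in>S. c i * (\<Sum>b\<in>B i. d i b * b v K))"
    proof (rule sum.cong[OF refl])
      fix i assume i: "i \<in> S"
      have "B i \<subseteq> BB" using i by (auto simp: BB_def)
      then have "BB \<inter> B i = B i" by auto
      then show "c i * (\<Sum>b\<in>BB. (if b \<in> B i then d i b * b v K else 0)) = c i * (\<Sum>b\<in>B i. d i b * b v K)"
        using sum.inter_restrict[OF finBB, of "\<lambda>b. d i b * b v K" "B i"] by simp
    qed
    also have "\<dots> = (\<Sum>i\<in>S. c i * f i v K)"
      using Bd by (intro sum.cong) auto
    finally show "(\<Sum>i\<in>S. c i * f i v K) = (\<Sum>b\<in>BB. e b * b v K)" by simp
  qed
  moreover have "BB \<subseteq> X" using Bd by (auto simp: BB_def)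
  ultimately show ?thesis unfolding ospan_def using finBB by blast
qed

lemma ospan_base: "x \<in> X \<Longrightarrow> x \<in> ospan X"
  unfolding ospan_def by (intro CollectI exI[of _ "{x}"] exI[of _ "\<lambda>_. 1"]) auto

lemma ospan_add:
  assumes "F \<in> ospan X" "G \<in> ospan X"
  shows "(\<lambda>v K. c * F v K + d * G v K) \<in> ospan X"
  using ospan_lincomb[of "{True, False}" "\<lambda>b. if b then F else G" X "\<lambda>b. if b then c else d"] assms
  by simp

lemma hop_lin:
  assumes "finite S"
  shows "hop No a k (\<lambda>K. \<Sum>i\<in>S. c i * g i K) = (\<lambda>K. \<Sum>i\<in>S. c i * hop No a k (g i) K)"
  unfolding hop_def
  by (auto simp: fun_eq_iff sum_distrib_left sum_distrib_right mult.assoc intro: sum.swap)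

lemma Lop_lin:
  assumes "finite S"
  shows "Lop No m n (\<lambda>K. \<Sum>i\<in>S. c i * g i K) = (\<lambda>K. \<Sum>i\<in>S. c i * Lop No m n (g i) K)"
  unfolding Lop_def hop_lin[OF assms]
  by (auto simp: fun_eq_iff sum_distrib_left mult.left_commute intro: sum.swap)

lemma hop_zero: "hop No a k (\<lambda>_. 0) = (\<lambda>_. 0)"
  by (simp add: hop_def)

lemma hop_scaled_ket:
  assumes "L \<subseteq> {..<No}"
  shows "hop No a k (\<lambda>K'. s * ket L K') = (\<lambda>K'. s * hop_ket a k L K')"
proof
  fix K'
  have "hop No a k (\<lambda>K'. s * ket L K') K' = (\<Sum>K\<in>Pow {..<No}. if K = L then s * hop_ket a k L K' else 0)"
    unfolding hop_def by (rule sum.cong) (auto simp: ket_def)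
  also have "\<dots> = s * hop_ket a k L K'" using assms by simp
  finally show "hop No a k (\<lambda>K'. s * ket L K') K' = s * hop_ket a k L K'" .
qed



definition HP :: "nat \<Rightarrow> (nat \<times> nat) list \<Rightarrow> fstate \<Rightarrow> fstate" where
  "HP No ps v = foldr (\<lambda>(a, k) f. hop No a k \<circ> f) ps id v"

lemma HP_Nil[simp]: "HP No [] v = v" by (simp add: HP_def)
lemma HP_Cons[simp]: "HP No ((a,k)#ps) v = hop No a k (HP No ps v)" by (simp add: HP_def)

definition adm :: "nat \<Rightarrow> (nat \<times> nat) list \<Rightarrow> bool" where
  "adm No ps \<longleftrightarrow> distinct (map fst ps) \<and> distinct (map snd ps)
     \<and> (\<forall>p\<in>set ps. \<forall>q\<in>set ps. snd p = fst q \<longrightarrow> p = q) \<and> (\<forall>p\<in>set ps. fst p < No)"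

lemma adm_Cons:
  assumes "adm No ((a,k)#ps)"
  shows "adm No ps" "a \<notin> fst ` set ps" "k \<notin> snd ` set ps" "k \<notin> fst ` set ps" "a < No"
proof -
  have d1: "distinct (map fst ((a,k)#ps))" and d2: "distinct (map snd ((a,k)#ps))"
    and d3: "\<forall>p\<in>set ((a,k)#ps). \<forall>q\<in>set ((a,k)#ps). snd p = fst q \<longrightarrow> p = q"
    and d4: "\<forall>p\<in>set ((a,k)#ps). fst p < No"
    using assms unfolding adm_def by blast+
  have s: "set ps \<subseteq> set ((a,k)#ps)" by auto
  have "\<forall>p\<in>set ps. \<forall>q\<in>set ps. snd p = fst q \<longrightarrow> p = q" using d3 s by blast
  moreover have "\<forall>p\<in>set ps. fst p < No" using d4 s by blast
  moreover have "distinct (map fst ps)" using d1 by simp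
  moreover have "distinct (map snd ps)" using d2 by simp
  ultimately show "adm No ps" unfolding adm_def by blast
  show "a \<notin> fst ` set ps" using d1 by simp
  show "k \<notin> snd ` set ps" using d2 by simp
  show "a < No" using d4 by simp
  show "k \<notin> fst ` set ps"
  proof
    assume "k \<in> fst ` set ps"
    then obtain q where q: "q \<in> set ps" "fst q = k" by blast
    have "(a,k) \<in> set ((a,k)#ps)" "q \<in> set ((a,k)#ps)" using q by auto
    with d3 q have "(a,k) = q" by fastforce
    then have "a \<in> fst ` set ps" using q by force
    then show False using d1 by simp
  qed
qed

lemma adm_lt:
  assumes "adm No ps" "p \<in> set ps" shows "fst p < No"
proof -
  have "\<forall>p\<in>set ps. fst p < No" using assms(1) unfolding adm_def by (elim conjE)
  then show ?thesis using assms(2) by blast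
qed

lemma ann_sign_nz: "ann_sign j K \<noteq> 0" by (simp add: ann_sign_def)

lemma key:
  assumes "adm No ps" "L \<subseteq> {..<No}"
  shows "(snd`set ps \<subseteq> L \<and> fst`set ps \<inter> (L - snd`set ps) = {} \<longrightarrow>
           (\<exists>s. s \<noteq> 0 \<and> HP No ps (ket L) = (\<lambda>K'. s * ket ((L - snd`set ps) \<union> fst`set ps) K')))
       \<and> (\<not>(snd`set ps \<subseteq> L \<and> fst`set ps \<inter> (L - snd`set ps) = {}) \<longrightarrow> HP No ps (ket L) = (\<lambda>_. 0))"
  using assms(1)
proof (induction ps)
  case Nil
  then show ?case by (auto intro!: exI[of _ 1])
next
  case (Cons p ps)
  obtain a k where p: "p = (a,k)" by force
  note adm = adm_Cons[OF Cons.prems[unfolded p]]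
  note IH = Cons.IH[OF adm(1)]
  define K' where "K' = snd ` set ps"
  define A' where "A' = fst ` set ps"
  have KK: "snd ` set (p#ps) = insert k K'" and AA: "fst ` set (p#ps) = insert a A'"
    by (auto simp: p K'_def A'_def)
  have aA: "a \<notin> A'" and kK: "k \<notin> K'" and kA: "k \<notin> A'" and aN: "a < No"
    using adm(2-5) by (auto simp: K'_def A'_def)
  have AN: "A' \<subseteq> {..<No}" using adm_lt[OF adm(1)] unfolding A'_def by auto
  show ?case
  proof (cases "K' \<subseteq> L \<and> A' \<inter> (L - K') = {}")
    case True
    have i1: "snd`set ps \<subseteq> L \<and> fst`set ps \<inter> (L - snd`set ps) = {} \<longrightarrow>
           (\<exists>s. s \<noteq> 0 \<and> HP No ps (ket L) = (\<lambda>K'. s * ket ((L - snd`set ps) \<union> fst`set ps) K'))"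
      using IH by (rule conjunct1)
    have "snd`set ps \<subseteq> L \<and> fst`set ps \<inter> (L - snd`set ps) = {}" using True by (simp only: K'_def A'_def)
    from mp[OF i1 this] obtain s where s0: "s \<noteq> 0"
      "HP No ps (ket L) = (\<lambda>K'. s * ket ((L - snd`set ps) \<union> fst`set ps) K')" by blast
    have s: "s \<noteq> 0" "HP No ps (ket L) = (\<lambda>K'a. s * ket ((L - K') \<union> A') K'a)"
      using s0 unfolding K'_def A'_def by blast+
    define L' where "L' = (L - K') \<union> A'"
    have L'N: "L' \<subseteq> {..<No}" using assms(2) AN by (auto simp: L'_def)
    have "HP No (p#ps) (ket L) = hop No a k (\<lambda>K'a. s * ket L' K'a)"
      using s(2) unfolding p L'_def by simp
    also have "\<dots> = (\<lambda>K'a. s * hop_ket a k L' K'a)" by (rule hop_scaled_ket[OF L'N])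
    finally have HPc: "HP No (p#ps) (ket L) = (\<lambda>K'a. s * hop_ket a k L' K'a)" .
    define C where "C = (insert k K' \<subseteq> L \<and> insert a A' \<inter> (L - insert k K') = {})"
    have eq1: "(k \<in> L' \<and> a \<notin> L' - {k}) = C"
    proof
      assume h: "k \<in> L' \<and> a \<notin> L' - {k}"
      have "k \<in> L" using h kA unfolding L'_def by blast
      moreover have "a \<notin> L - insert k K'" using h aA unfolding L'_def by blast
      moreover have "A' \<inter> (L - insert k K') = {}" using True by blast
      ultimately show C unfolding C_def using True by blast
    next
      assume C
      then show "k \<in> L' \<and> a \<notin> L' - {k}" unfolding C_def L'_def using kK aA by blast
    qed
    have eq2: "insert a (L' - {k}) = (L - insert k K') \<union> insert a A'"
      using kK kA unfolding L'_def by blast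
    show ?thesis
    proof (cases "k \<in> L' \<and> a \<notin> L' - {k}")
      case True2: True
      have HP2: "HP No (p#ps) (ket L) = (\<lambda>K'a. (s * ann_sign k L' * ann_sign a (L' - {k})) * ket ((L - insert k K') \<union> insert a A') K'a)"
      proof -
        have hk: "hop_ket a k L' = (\<lambda>K'a. ann_sign k L' * ann_sign a (L' - {k}) * ket (insert a (L' - {k})) K'a)"
          unfolding hop_ket_def by (rule if_P[OF True2])
        show ?thesis by (simp only: HPc hk eq2 mult.assoc)
      qed
      have nz: "s * ann_sign k L' * ann_sign a (L' - {k}) \<noteq> 0" using s(1) ann_sign_nz by simp
      have C using True2 eq1 by blast
      show ?thesis unfolding KK AA
      proof (intro conjI impI)
        show "\<exists>s. s \<noteq> 0 \<and> HP No (p # ps) (ket L) = (\<lambda>K'a. s * ket (L - insert k K' \<union> insert a A') K'a)"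
          by (rule exI[of _ "s * ann_sign k L' * ann_sign a (L' - {k})"]) (rule conjI[OF nz HP2])
      next
        assume "\<not> (insert k K' \<subseteq> L \<and> insert a A' \<inter> (L - insert k K') = {})"
        then show "HP No (p # ps) (ket L) = (\<lambda>_. 0)" using \<open>C\<close> unfolding C_def by blast
      qed
    next
      case False
      have HP2: "HP No (p#ps) (ket L) = (\<lambda>_. 0)"
      proof -
        have hk: "hop_ket a k L' = (\<lambda>_. 0)"
          unfolding hop_ket_def by (rule if_not_P[OF False])
        show ?thesis by (simp only: HPc hk mult_zero_right)
      qed
      have "\<not> C" using False eq1 by blast
      show ?thesis unfolding KK AA
      proof (intro conjI impI)
        assume "insert k K' \<subseteq> L \<and> insert a A' \<inter> (L - insert k K') = {}"
        then have False using \<open>\<not> C\<close> unfolding C_def by blast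
        then show "\<exists>s. s \<noteq> 0 \<and> HP No (p # ps) (ket L) = (\<lambda>K'a. s * ket (L - insert k K' \<union> insert a A') K'a)" ..
      next
        show "HP No (p # ps) (ket L) = (\<lambda>_. 0)" by (rule HP2)
      qed
    qed
  next
    case False
    have i2: "\<not>(snd`set ps \<subseteq> L \<and> fst`set ps \<inter> (L - snd`set ps) = {}) \<longrightarrow> HP No ps (ket L) = (\<lambda>_. 0)"
      using IH by (rule conjunct2)
    have "\<not>(snd`set ps \<subseteq> L \<and> fst`set ps \<inter> (L - snd`set ps) = {})" using False by (simp only: K'_def A'_def not_False_eq_True)
    from mp[OF i2 this] have z: "HP No ps (ket L) = (\<lambda>_. 0)" .
    have nc: "\<not> (insert k K' \<subseteq> L \<and> insert a A' \<inter> (L - insert k K') = {})" using False kA by blast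
    have "HP No (p#ps) (ket L) = (\<lambda>_. 0)" using z by (simp add: p hop_zero)
    then show ?thesis unfolding KK AA using nc by blast
  qed
qed

section \<open>Particle-number space\<close>

lemma finite_slaters: "finite (slaters Ne No)"
proof -
  have "slaters Ne No \<subseteq> Pow {..<No}" by (auto simp: slaters_def)
  then show ?thesis by (rule finite_subset) simp
qed

lemma Hspace_expand:
  assumes "v \<in> Hspace Ne No"
  shows "v = (\<lambda>K'. \<Sum>L\<in>slaters Ne No. v L * ket L K')"
proof
  fix K'
  have "(\<Sum>L\<in>slaters Ne No. v L * ket L K') = (\<Sum>L\<in>slaters Ne No. if L = K' then v K' else 0)"
    by (rule sum.cong) (auto simp: ket_def)
  also have "\<dots> = v K'"
    using assms finite_slaters by (auto simp: Hspace_def)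
  finally show "v K' = (\<Sum>L\<in>slaters Ne No. v L * ket L K')" by simp
qed

lemma Hspace_lincomb:
  assumes "finite B" "B \<subseteq> Hspace Ne No"
  shows "(\<lambda>K. \<Sum>b\<in>B. c b * b K) \<in> Hspace Ne No"
proof -
  have "K \<in> slaters Ne No" if "(\<Sum>b\<in>B. c b * b K) \<noteq> 0" for K
  proof -
    from that obtain b where "b \<in> B" "c b * b K \<noteq> 0"
      using sum.neutral[of B "\<lambda>b. c b * b K"] by blast
    then show ?thesis using assms(2) by (auto simp: Hspace_def)
  qed
  then show ?thesis by (auto simp: Hspace_def)
qed

lemma cspan_Hspace: "X \<subseteq> Hspace Ne No \<Longrightarrow> cspan X \<subseteq> Hspace Ne No"
  unfolding cspan_def using Hspace_lincomb by blast

lemma hop_Hspace: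
  assumes v: "v \<in> Hspace Ne No" and a: "a < No"
  shows "hop No a j v \<in> Hspace Ne No"
proof -
  have "K' \<in> slaters Ne No" if "hop No a j v K' \<noteq> 0" for K'
  proof -
    from that obtain K where K: "K \<in> Pow {..<No}" "v K * hop_ket a j K K' \<noteq> 0"
      unfolding hop_def using sum.neutral[of "Pow {..<No}" "\<lambda>K. v K * hop_ket a j K K'"] by blast
    then have Ks: "K \<in> slaters Ne No" using v by (auto simp: Hspace_def)
    from K have c: "j \<in> K" "a \<notin> K - {j}" "K' = insert a (K - {j})"
      by (auto simp: hop_ket_def ket_def split: if_splits)
    have fin: "finite K" using Ks finite_subset[of K "{..<No}"] by (auto simp: slaters_def)
    have "card K > 0" using c fin by (auto simp: card_gt_0_iff)
    then have "card K' = card K" using c fin by (simp add: card_insert_if card_Diff_singleton)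
    moreover have "K' \<subseteq> {..<No}" using c a Ks by (auto simp: slaters_def)
    ultimately show ?thesis using Ks by (auto simp: slaters_def)
  qed
  then show ?thesis by (auto simp: Hspace_def)
qed

lemma Lop_Hspace:
  assumes v: "v \<in> Hspace Ne No"
  shows "Lop No m n v \<in> Hspace Ne No"
proof -
  have "K' \<in> slaters Ne No" if "Lop No m n v K' \<noteq> 0" for K'
  proof -
    from that obtain j where j: "j \<in> {j. j < No \<and> n \<le> j \<and> j - n + m < No}"
      "complex_of_real (Acoef m n j) * hop No (j - n + m) j v K' \<noteq> 0"
      unfolding Lop_def using sum.neutral[of "{j. j < No \<and> n \<le> j \<and> j - n + m < No}"
        "\<lambda>j. complex_of_real (Acoef m n j) * hop No (j - n + m) j v K'"] by blast
    then have j3: "j - n + m < No" by (simp only: mem_Collect_eq)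
    have "hop No (j - n + m) j v K' \<noteq> 0" using j(2) by auto
    with hop_Hspace[OF v j3] show ?thesis by (auto simp: Hspace_def)
  qed
  then show ?thesis by (auto simp: Hspace_def)
qed

lemma Lprod_Nil[simp]: "Lprod No [] v = v" by (simp add: Lprod_def)
lemma Lprod_Cons[simp]: "Lprod No ((m,n)#ms) v = Lop No m n (Lprod No ms v)" by (simp add: Lprod_def)

lemma Lprod_Hspace: "v \<in> Hspace Ne No \<Longrightarrow> Lprod No ms v \<in> Hspace Ne No"
proof (induction ms)
  case Nil then show ?case by simp
next
  case (Cons p ms) then show ?case by (cases p) (simp add: Lop_Hspace)
qed


section \<open>Operator spans and products\<close>

lemma HP_lin:
  assumes "finite S"
  shows "HP No ps (\<lambda>K. \<Sum>i\<in>S. c i * g i K) = (\<lambda>K. \<Sum>i\<in>S. c i * HP No ps (g i) K)"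
proof (induction ps)
  case Nil then show ?case by simp
next
  case (Cons p ps)
  obtain a k where p: "p = (a,k)" by force
  have "HP No (p#ps) (\<lambda>K. \<Sum>i\<in>S. c i * g i K) = hop No a k (\<lambda>K. \<Sum>i\<in>S. c i * HP No ps (g i) K)"
    unfolding p HP_Cons Cons.IH ..
  also have "\<dots> = (\<lambda>K. \<Sum>i\<in>S. c i * hop No a k (HP No ps (g i)) K)"
    by (rule hop_lin[OF assms])
  finally show ?case unfolding p HP_Cons .
qed

definition LL :: "nat \<Rightarrow> (fstate \<Rightarrow> fstate) set" where
  "LL No = {Lop No m n | m n. True}"

definition XX :: "nat \<Rightarrow> fstate \<Rightarrow> nat \<Rightarrow> fstate set" where
  "XX No \<phi> k = {Lprod No ms \<phi> | ms. length ms = k}"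

lemma Lop_step:
  assumes "w \<in> cspan (XX No \<phi> k)"
  shows "Lop No m n w \<in> cspan (XX No \<phi> (Suc k))"
proof -
  obtain B c where B: "finite B" "B \<subseteq> XX No \<phi> k" "w = (\<lambda>K. \<Sum>b\<in>B. c b * b K)"
    using assms unfolding cspan_def by blast
  have "Lop No m n w = (\<lambda>K. \<Sum>b\<in>B. c b * Lop No m n b K)"
    unfolding B(3) by (rule Lop_lin[OF B(1)])
  moreover have "\<forall>b\<in>B. Lop No m n b \<in> cspan (XX No \<phi> (Suc k))"
  proof
    fix b assume "b \<in> B"
    then obtain ms where ms: "b = Lprod No ms \<phi>" "length ms = k" using B(2) unfolding XX_def by blast
    have "Lop No m n b = Lprod No ((m,n)#ms) \<phi>" unfolding ms(1) by simp
    moreover have "length ((m,n)#ms) = Suc k" using ms(2) by simp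
    ultimately have "Lop No m n b \<in> XX No \<phi> (Suc k)" unfolding XX_def by blast
    then show "Lop No m n b \<in> cspan (XX No \<phi> (Suc k))" by (rule cspan_base)
  qed
  ultimately show ?thesis using cspan_lincomb[OF B(1)] by simp
qed

lemma ospan_step:
  assumes F: "F \<in> ospan (LL No)" and w: "w \<in> cspan (XX No \<phi> k)"
  shows "F w \<in> cspan (XX No \<phi> (Suc k))"
proof -
  obtain B c where B: "finite B" "B \<subseteq> LL No" "F = (\<lambda>v K. \<Sum>b\<in>B. c b * b v K)"
    using F unfolding ospan_def by blast
  have "F w = (\<lambda>K. \<Sum>b\<in>B. c b * b w K)" unfolding B(3) ..
  moreover have "\<forall>b\<in>B. b w \<in> cspan (XX No \<phi> (Suc k))"
  proof
    fix b assume "b \<in> B"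
    then obtain m n where "b = Lop No m n" using B(2) unfolding LL_def by blast
    then show "b w \<in> cspan (XX No \<phi> (Suc k))" using Lop_step[OF w] by simp
  qed
  ultimately show ?thesis using cspan_lincomb[OF B(1)] by simp
qed

lemma Acoef_diag_pos: "Acoef a j j > 0"
  unfolding Acoef_def by simp

lemma hop_in_ospan_aux:
  "\<forall>j a. No - j = d \<longrightarrow> j < No \<longrightarrow> a < No \<longrightarrow> hop No a j \<in> ospan (LL No)"
proof (induction d rule: less_induct)
  case (less d)
  show ?case
  proof (intro allI impI)
    fix j a assume d: "No - j = d" and j: "j < No" and a: "a < No"
    define J where "J = {j'. j' < No \<and> j < j' \<and> j' - j + a < No}"
    have finJ: "finite J" unfolding J_def by (rule finite_subset[of _ "{..<No}"]) auto
    have IHJ: "\<forall>j'\<in>J. hop No (j' - j + a) j' \<in> ospan (LL No)"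
    proof
      fix j' assume "j' \<in> J"
      then have h: "j' < No" "j < j'" "j' - j + a < No" unfolding J_def by auto
      have "No - j' < d" using h d j by linarith
      then show "hop No (j' - j + a) j' \<in> ospan (LL No)" using less h by blast
    qed
    define G where "G = (\<lambda>v K. \<Sum>j'\<in>J. complex_of_real (Acoef a j j') * hop No (j' - j + a) j' v K)"
    have G: "G \<in> ospan (LL No)" unfolding G_def by (rule ospan_lincomb[OF finJ IHJ])
    have Lb: "Lop No a j \<in> ospan (LL No)" by (rule ospan_base) (auto simp: LL_def)
    define Aj where "Aj = complex_of_real (Acoef a j j)"
    have Ajnz: "Aj \<noteq> 0" using Acoef_diag_pos[of a j] unfolding Aj_def by simp
    have seteq: "{j'. j' < No \<and> j \<le> j' \<and> j' - j + a < No} = insert j J"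
      using j a unfolding J_def by auto
    have jJ: "j \<notin> J" unfolding J_def by simp
    have split: "Lop No a j v K = Aj * hop No a j v K + G v K" for v K
      unfolding Lop_def seteq G_def Aj_def sum.insert[OF finJ jJ] by simp
    have "hop No a j = (\<lambda>v K. (1 / Aj) * Lop No a j v K + (- 1 / Aj) * G v K)"
    proof (intro ext)
      fix v K
      show "hop No a j v K = (1 / Aj) * Lop No a j v K + (- 1 / Aj) * G v K"
        unfolding split using Ajnz by (simp add: field_simps)
    qed
    then show "hop No a j \<in> ospan (LL No)" by (simp only: ospan_add[OF Lb G])
  qed
qed

lemma hop_in_ospan: "j < No \<Longrightarrow> a < No \<Longrightarrow> hop No a j \<in> ospan (LL No)"
  using hop_in_ospan_aux by blast

lemma HP_span:
  assumes "\<forall>p\<in>set ps. fst p < No \<and> snd p < No"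
  shows "HP No ps \<phi> \<in> cspan (XX No \<phi> (length ps))"
  using assms
proof (induction ps)
  case Nil
  have "\<phi> \<in> XX No \<phi> 0" unfolding XX_def by (intro CollectI exI[of _ "[]"]) simp
  then show ?case by (simp add: cspan_base)
next
  case (Cons p ps)
  obtain a k where p: "p = (a,k)" by force
  have ak: "a < No" "k < No" using Cons.prems p by auto
  have "HP No ps \<phi> \<in> cspan (XX No \<phi> (length ps))" using Cons by simp
  from ospan_step[OF hop_in_ospan[OF ak(2) ak(1)] this]
  show ?case unfolding p by simp
qed


section \<open>Construction of the transfer operator\<close>

lemma exists_ps:
  assumes K: "K \<in> slaters Ne No" and A: "A \<in> slaters Ne No"
  shows "\<exists>ps. adm No ps \<and> snd ` set ps = K \<and> fst ` set ps = A \<and> length ps = Ne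
             \<and> (\<forall>p\<in>set ps. fst p < No \<and> snd p < No)"
proof -
  have KN: "K \<subseteq> {..<No}" "card K = Ne" and AN: "A \<subseteq> {..<No}" "card A = Ne"
    using K A by (auto simp: slaters_def)
  have fK: "finite K" using KN(1) finite_subset by blast
  have fA: "finite A" using AN(1) finite_subset by blast
  define us where "us = sorted_list_of_set (K - A)"
  define ws where "ws = sorted_list_of_set (A - K)"
  define xs where "xs = sorted_list_of_set (K \<inter> A)"
  define ps where "ps = zip ws us @ map (\<lambda>x. (x,x)) xs"
  have sus: "set us = K - A" "distinct us" using fK unfolding us_def by auto
  have sws: "set ws = A - K" "distinct ws" using fA unfolding ws_def by auto
  have sxs: "set xs = K \<inter> A" "distinct xs" using fK unfolding xs_def by auto
  have c1: "card (K - A) = card K - card (K \<inter> A)" using fK by (intro card_Diff_subset_Int) auto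
  have c2: "card (A - K) = card A - card (A \<inter> K)" using fA by (intro card_Diff_subset_Int) auto
  have "A \<inter> K = K \<inter> A" by blast
  then have len: "length ws = length us"
    unfolding us_def ws_def using c1 c2 KN(2) AN(2) by simp
  have mf: "map fst ps = ws @ xs" unfolding ps_def using len by (simp add: comp_def)
  have ms: "map snd ps = us @ xs" unfolding ps_def using len by (simp add: comp_def)
  have d1: "distinct (map fst ps)" unfolding mf using sws sxs by auto
  have d2: "distinct (map snd ps)" unfolding ms using sus sxs by auto
  have sf: "fst ` set ps = A"
  proof -
    have "fst ` set ps = set (map fst ps)" by simp
    also have "\<dots> = A" unfolding mf using sws sxs by auto
    finally show ?thesis .
  qed
  have ss: "snd ` set ps = K"
  proof -
    have "snd ` set ps = set (map snd ps)" by simp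
    also have "\<dots> = K" unfolding ms using sus sxs by auto
    finally show ?thesis .
  qed
  have glob: "\<forall>p\<in>set ps. \<forall>q\<in>set ps. snd p = fst q \<longrightarrow> p = q"
  proof (intro ballI impI)
    fix p q assume p: "p \<in> set ps" and q: "q \<in> set ps" and e: "snd p = fst q"
    have setps: "set ps = set (zip ws us) \<union> (\<lambda>x. (x,x)) ` set xs" unfolding ps_def by simp
    have zipL: "fst r \<in> A - K" "snd r \<in> K - A" if "r \<in> set (zip ws us)" for r
    proof -
      obtain x y where r: "r = (x,y)" by force
      show "fst r \<in> A - K" using set_zip_leftD[of x y ws us] that sws unfolding r by auto
      show "snd r \<in> K - A" using set_zip_rightD[of x y ws us] that sus unfolding r by auto
    qed
    have fqA: "fst q \<in> A" using q sf by blast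
    have pn: "p \<notin> set (zip ws us)"
    proof
      assume "p \<in> set (zip ws us)"
      then have "snd p \<in> K - A" by (rule zipL(2))
      then show False using e fqA by simp
    qed
    then obtain x where x: "x \<in> set xs" "p = (x,x)" using p setps by blast
    have fqK: "fst q \<in> K" using e x sxs(1) by auto
    have qn: "q \<notin> set (zip ws us)"
    proof
      assume "q \<in> set (zip ws us)"
      then have "fst q \<in> A - K" by (rule zipL(1))
      then show False using fqK by simp
    qed
    then obtain y where y: "y \<in> set xs" "q = (y,y)" using q setps by blast
    show "p = q" using x y e by simp
  qed
  have adm: "adm No ps" unfolding adm_def using d1 d2 glob sf AN(1) by blast
  have "length ps = length (map snd ps)" by simp
  also have "\<dots> = card (set (map snd ps))" using distinct_card[OF d2] by (rule sym)
  also have "\<dots> = Ne" using ss KN(2) by (simp only: set_map)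
  finally have lps: "length ps = Ne" .
  have bnd: "\<forall>p\<in>set ps. fst p < No \<and> snd p < No" using sf ss AN(1) KN(1) by blast
  show ?thesis using adm ss sf lps bnd by blast
qed

lemma ket_in_span:
  assumes phi: "\<phi> \<in> Hspace Ne No" "\<phi> \<noteq> (\<lambda>_. 0)" and A: "A \<in> slaters Ne No"
  shows "ket A \<in> cspan (XX No \<phi> Ne)"
proof -
  obtain K where K0: "\<phi> K \<noteq> 0" using phi(2) by blast
  then have K: "K \<in> slaters Ne No" using phi(1) unfolding Hspace_def by blast
  obtain ps where ps: "adm No ps" "snd ` set ps = K" "fst ` set ps = A" "length ps = Ne"
      "\<forall>p\<in>set ps. fst p < No \<and> snd p < No"
    using exists_ps[OF K A] by blast
  have KN: "K \<subseteq> {..<No}" "card K = Ne" using K by (auto simp: slaters_def)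
  have k1: "snd ` set ps \<subseteq> K \<and> fst ` set ps \<inter> (K - snd ` set ps) = {}" using ps(2) by blast
  have "\<exists>s. s \<noteq> 0 \<and> HP No ps (ket K) = (\<lambda>K'. s * ket ((K - snd`set ps) \<union> fst`set ps) K')"
    using key[OF ps(1) KN(1)] k1 by blast
  moreover have "(K - snd`set ps) \<union> fst`set ps = A" using ps(2,3) by blast
  ultimately obtain s where s: "s \<noteq> 0" "HP No ps (ket K) = (\<lambda>K'. s * ket A K')" by auto
  have z: "HP No ps (ket L) = (\<lambda>_. 0)" if L: "L \<in> slaters Ne No" "L \<noteq> K" for L
  proof -
    have LN: "L \<subseteq> {..<No}" "card L = Ne" using L by (auto simp: slaters_def)
    have fL: "finite L" using LN(1) finite_subset by blast
    have "\<not> (snd ` set ps \<subseteq> L \<and> fst ` set ps \<inter> (L - snd ` set ps) = {})"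
    proof
      assume "snd ` set ps \<subseteq> L \<and> fst ` set ps \<inter> (L - snd ` set ps) = {}"
      then have "K \<subseteq> L" using ps(2) by blast
      then have "K = L" using card_subset_eq[OF fL] LN(2) KN(2) by simp
      then show False using L(2) by simp
    qed
    then show ?thesis using key[OF ps(1) LN(1)] by blast
  qed
  have exp: "\<phi> = (\<lambda>K'. \<Sum>L\<in>slaters Ne No. \<phi> L * ket L K')" by (rule Hspace_expand[OF phi(1)])
  have "HP No ps \<phi> = (\<lambda>K'. \<Sum>L\<in>slaters Ne No. \<phi> L * HP No ps (ket L) K')"
    by (subst exp) (rule HP_lin[OF finite_slaters])
  also have "\<dots> = (\<lambda>K'. \<phi> K * (s * ket A K'))"
  proof
    fix K'
    have "(\<Sum>L\<in>slaters Ne No. \<phi> L * HP No ps (ket L) K')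
        = (\<Sum>L\<in>slaters Ne No. if L = K then \<phi> K * (s * ket A K') else 0)"
    proof (rule sum.cong[OF refl])
      fix L assume "L \<in> slaters Ne No"
      then show "\<phi> L * HP No ps (ket L) K' = (if L = K then \<phi> K * (s * ket A K') else 0)"
        using z[of L] s(2) by (cases "L = K") simp_all
    qed
    also have "\<dots> = \<phi> K * (s * ket A K')" using K finite_slaters by simp
    finally show "(\<Sum>L\<in>slaters Ne No. \<phi> L * HP No ps (ket L) K') = \<phi> K * (s * ket A K')" .
  qed
  finally have HPphi: "HP No ps \<phi> = (\<lambda>K'. \<phi> K * (s * ket A K'))" .
  have inspan: "HP No ps \<phi> \<in> cspan (XX No \<phi> Ne)" using HP_span[OF ps(5)] ps(4) by simp
  have "(\<lambda>K'. (1 / (\<phi> K * s)) * HP No ps \<phi> K') \<in> cspan (XX No \<phi> Ne)"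
    by (rule cspan_scale[OF inspan])
  moreover have "(\<lambda>K'. (1 / (\<phi> K * s)) * HP No ps \<phi> K') = ket A"
    unfolding HPphi using K0 s(1) by (auto simp: fun_eq_iff)
  ultimately show ?thesis by simp
qed

lemma part1:
  assumes phi: "\<phi> \<in> Hspace Ne No" "\<phi> \<noteq> (\<lambda>_. 0)"
  shows "cspan {Lprod No ms \<phi> | ms. length ms \<le> Ne} = Hspace Ne No"
proof
  show "cspan {Lprod No ms \<phi> | ms. length ms \<le> Ne} \<subseteq> Hspace Ne No"
    by (rule cspan_Hspace) (auto intro: Lprod_Hspace[OF phi(1)])
next
  show "Hspace Ne No \<subseteq> cspan {Lprod No ms \<phi> | ms. length ms \<le> Ne}"
  proof
    fix v assume v: "v \<in> Hspace Ne No"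
    have sub: "cspan (XX No \<phi> Ne) \<subseteq> cspan {Lprod No ms \<phi> | ms. length ms \<le> Ne}"
      by (rule cspan_mono) (auto simp: XX_def)
    have "\<forall>L\<in>slaters Ne No. ket L \<in> cspan {Lprod No ms \<phi> | ms. length ms \<le> Ne}"
      using ket_in_span[OF phi] sub by blast
    from cspan_lincomb[OF finite_slaters this, of v]
    show "v \<in> cspan {Lprod No ms \<phi> | ms. length ms \<le> Ne}"
      using Hspace_expand[OF v] by simp
  qed
qed

theorem theorem3:
  fixes No Ne :: nat and \<phi> :: fstate
  assumes "1 \<le> No" and "Ne \<le> No"
    and "\<phi> \<in> Hspace Ne No" and "\<phi> \<noteq> (\<lambda>_. 0)"
  shows "cspan {Lprod No ms \<phi> | ms. length ms \<le> Ne} = Hspace Ne No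
    \<and> (\<forall>G \<subseteq> Hspace Ne No. (\<exists>g\<in>G. g \<noteq> (\<lambda>_. 0)) \<longrightarrow>
         (\<forall>\<psi> \<in> Hspace Ne No. (\<forall>g\<in>G. inner_f Ne No g \<psi> = 0) \<longrightarrow>
            \<psi> \<in> cspan {Lprod No ms g | ms g. g \<in> G \<and> length ms \<le> Ne}))"
proof (intro conjI allI impI ballI)
  show "cspan {Lprod No ms \<phi> | ms. length ms \<le> Ne} = Hspace Ne No"
    by (rule part1[OF assms(3,4)])
next
  fix G \<psi>
  assume G: "G \<subseteq> Hspace Ne No" and ex: "\<exists>g\<in>G. g \<noteq> (\<lambda>_. 0)" and psi: "\<psi> \<in> Hspace Ne No"
  from ex obtain g where g: "g \<in> G" "g \<noteq> (\<lambda>_. 0)" by blast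
  have "\<psi> \<in> cspan {Lprod No ms g | ms. length ms \<le> Ne}"
    using part1[OF _ g(2)] G g(1) psi by blast
  moreover have "cspan {Lprod No ms g | ms. length ms \<le> Ne}
      \<subseteq> cspan {Lprod No ms g | ms g. g \<in> G \<and> length ms \<le> Ne}"
    by (rule cspan_mono) (use g(1) in blast)
  ultimately show "\<psi> \<in> cspan {Lprod No ms g | ms g. g \<in> G \<and> length ms \<le> Ne}" by blast
qed

end
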